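(* Let $\mathfrak g$ be a complex Lie algebra with bracket $[\ ,\ ]$, let $\tilde{\mathfrak g}=\mathfrak g\oplus\mathbb C$, and for $\lambda\in\mathbb C$ let $\mathfrak R(\lambda):\tilde{\mathfrak g}\otimes\tilde{\mathfrak g}\to\tilde{\mathfrak g}\otimes\tilde{\mathfrak g}$ be $\mathfrak R(\lambda)\big((x+\alpha)\otimes(y+\beta)\big)=(y+\beta)\otimes(x+\alpha)+[x,y]\otimes\lambda$ ($x,y\in\mathfrak g$, $\alpha,\beta\in\mathbb C$). Let $V$ be a complex vector space and $A:\mathfrak g\otimes V\to V$ a linear map, and define $\mathfrak R_V(\lambda):\tilde{\mathfrak g}\otimes V\to V\otimes\tilde{\mathfrak g}$ by $\mathfrak R_V(\lambda)\big((x+\alpha)\otimes v\big)=v\otimes(x+\alpha)+A(x,v)\otimes\lambda$ ($x\in\mathfrak g$, $v\in V$, $\alpha\in\mathbb C$). Then the equality of maps $\tilde{\mathfrak g}\otimes\tilde{\mathfrak g}\otimes V\to V\otimes\tilde{\mathfrak g}\otimes\tilde{\mathfrak g}$ $$(\mathfrak R_V(\lambda)\otimes 1_{\tilde{\mathfrak g}})\circ(1_{\tilde{\mathfrak g}}\otimes\mathfrak R_V(\lambda))\circ(\mathfrak R(\lambda)\otimes 1_V)=(1_V\otimes\mathfrak R(\lambda))\circ(\mathfrak R_V(\lambda)\otimes 1_{\tilde{\mathfrak g}})\circ(1_{\tilde{\mathfrak g}}\otimes\mathfrak R_V(\lambda))$$ holds for every $\lambda\in\mathbb C$ if and only if $A$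 is a $\mathfrak g$-action on $V$, i.e. $A([x,y],v)=A(x,A(y,v))-A(y,A(x,v))$ for all $x,y\in\mathfrak g$, $v\in V$.
   Context: All tensor products are over $\mathbb C$; $\lambda$, $[x,y]$ are regarded as elements of $\tilde{\mathfrak g}=\mathfrak g\oplus\mathbb C$ via the obvious inclusions. *)

theory Defs
  imports Complex_Main "HOL-Library.Poly_Mapping" "HOL-Library.Product_Plus"
begin

text \<open>Complex vector spaces are types of class ab_group_add together with a
scalar multiplication by complex numbers satisfying the vector_space axioms.
Tensor products are realised as free complex vector spaces on tuples modulo
the span of the multilinearity relations.\<close>

type_synonym 'a fv = "'a \<Rightarrow>\<^sub>0 complex"

definition fsc :: "complex \<Rightarrow> 'a fv \<Rightarrow> 'a fv" where
  "fsc c p = Poly_Mapping.map (\<lambda>z. c * z) p"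

definition gen :: "'a \<Rightarrow> 'a fv" where
  "gen s = Poly_Mapping.single s 1"

definition fext :: "('a \<Rightarrow> 'b fv) \<Rightarrow> 'a fv \<Rightarrow> 'b fv" where
  "fext f p = (\<Sum>s\<in>Poly_Mapping.keys p. fsc (Poly_Mapping.lookup p s) (f s))"

definition tensor3_rels ::
  "(complex \<Rightarrow> 'a \<Rightarrow> 'a::ab_group_add) \<Rightarrow> (complex \<Rightarrow> 'b \<Rightarrow> 'b::ab_group_add) \<Rightarrow>
   (complex \<Rightarrow> 'c \<Rightarrow> 'c::ab_group_add) \<Rightarrow> ('a \<times> 'b \<times> 'c) fv set" where
  "tensor3_rels sa sb sc =
     {gen (a + a', b, c) - gen (a, b, c) - gen (a', b, c) | a a' b c. True} \<union>
     {gen (a, b + b', c) - gen (a, b, c) - gen (a, b', c) | a b b' c. True} \<union>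
     {gen (a, b, c + c') - gen (a, b, c) - gen (a, b, c') | a b c c'. True} \<union>
     {gen (sa k a, b, c) - fsc k (gen (a, b, c)) | k a b c. True} \<union>
     {gen (a, sb k b, c) - fsc k (gen (a, b, c)) | k a b c. True} \<union>
     {gen (a, b, sc k c) - fsc k (gen (a, b, c)) | k a b c. True}"

definition tensor3_eq ::
  "(complex \<Rightarrow> 'a \<Rightarrow> 'a::ab_group_add) \<Rightarrow> (complex \<Rightarrow> 'b \<Rightarrow> 'b::ab_group_add) \<Rightarrow>
   (complex \<Rightarrow> 'c \<Rightarrow> 'c::ab_group_add) \<Rightarrow> ('a \<times> 'b \<times> 'c) fv \<Rightarrow> ('a \<times> 'b \<times> 'c) fv \<Rightarrow> bool" where
  "tensor3_eq sa sb sc p q \<longleftrightarrow> p - q \<in> module.span fsc (tensor3_rels sa sb sc)"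

definition tsc :: "(complex \<Rightarrow> 'g \<Rightarrow> 'g) \<Rightarrow> complex \<Rightarrow> 'g \<times> complex \<Rightarrow> 'g \<times> complex" where
  "tsc sg k p = (sg k (fst p), k * snd p)"

definition Rmap :: "('g::zero \<Rightarrow> 'g \<Rightarrow> 'g) \<Rightarrow> complex \<Rightarrow> 'g \<times> complex \<Rightarrow> 'g \<times> complex \<Rightarrow>
     (('g \<times> complex) \<times> ('g \<times> complex)) fv" where
  "Rmap br lam p q = gen (q, p) + gen ((br (fst p) (fst q), 0), (0, lam))"

definition RVmap :: "('g::zero \<Rightarrow> 'v \<Rightarrow> 'v) \<Rightarrow> complex \<Rightarrow> 'g \<times> complex \<Rightarrow> 'v \<Rightarrow>
     ('v \<times> ('g \<times> complex)) fv" where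
  "RVmap A lam p v = gen (v, p) + gen (A (fst p) v, (0, lam))"

definition tens_left :: "('a \<Rightarrow> 'b \<Rightarrow> ('p \<times> 'q) fv) \<Rightarrow> 'a \<times> 'b \<times> 'c \<Rightarrow> ('p \<times> 'q \<times> 'c) fv" where
  "tens_left f t = fext (\<lambda>(p, q). gen (p, q, snd (snd t))) (f (fst t) (fst (snd t)))"

definition tens_right :: "('b \<Rightarrow> 'c \<Rightarrow> ('p \<times> 'q) fv) \<Rightarrow> 'a \<times> 'b \<times> 'c \<Rightarrow> ('a \<times> 'p \<times> 'q) fv" where
  "tens_right f t = fext (\<lambda>(p, q). gen (fst t, p, q)) (f (fst (snd t)) (snd (snd t)))"

end

theory Submission
  imports Defs
begin

lemma lookup_fsc: "Poly_Mapping.lookup (fsc c p) k = c * Poly_Mapping.lookup p k"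
  unfolding fsc_def by (simp add: Poly_Mapping.map.rep_eq when_def)

lemma lookup_gen: "Poly_Mapping.lookup (gen s) k = (if s = k then 1 else 0)"
  unfolding gen_def by (simp add: lookup_single when_def)

lemma module_fsc: "module (fsc :: complex \<Rightarrow> 'a fv \<Rightarrow> 'a fv)"
  by unfold_locales (auto intro!: poly_mapping_eqI simp: lookup_fsc lookup_add algebra_simps)

definition lext :: "(complex \<Rightarrow> 'c \<Rightarrow> 'c) \<Rightarrow> ('b \<Rightarrow> 'c) \<Rightarrow> 'b fv \<Rightarrow> 'c::ab_group_add" where
  "lext sc g p = (\<Sum>s\<in>Poly_Mapping.keys p. sc (Poly_Mapping.lookup p s) (g s))"

lemma fext_lext: "fext f = lext fsc f"
  by (simp add: fun_eq_iff fext_def lext_def)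

lemma lext_superset:
  assumes "module sc" "finite S" "Poly_Mapping.keys p \<subseteq> S"
  shows "lext sc g p = (\<Sum>s\<in>S. sc (Poly_Mapping.lookup p s) (g s))"
  unfolding lext_def
  by (rule sum.mono_neutral_left) (use assms in \<open>auto simp: module.scale_zero_left in_keys_iff\<close>)

lemma keys_fsc: "Poly_Mapping.keys (fsc c p) \<subseteq> Poly_Mapping.keys p"
  by (auto simp: in_keys_iff lookup_fsc)

lemma lext_hom:
  assumes "module sc"
  shows "module_hom fsc sc (lext sc g)"
proof -
  interpret m: module sc by fact
  show ?thesis
  proof (rule module_hom.intro[OF module_fsc assms], unfold_locales)
    fix p q :: "'b fv"
    let ?S = "Poly_Mapping.keys p \<union> Poly_Mapping.keys q \<union> Poly_Mapping.keys (p+q)"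
    show "lext sc g (p + q) = lext sc g p + lext sc g q"
      by (subst (1 2 3) lext_superset[OF assms, of ?S])
         (auto simp: lookup_add m.scale_left_distrib sum.distrib)
  next
    fix r p
    show "lext sc g (fsc r p) = sc r (lext sc g p)"
      by (subst (1 2) lext_superset[OF assms, of "Poly_Mapping.keys p"])
         (auto simp: keys_fsc lookup_fsc m.scale_sum_right)
  qed
qed

lemma lext_gen: "module sc \<Longrightarrow> lext sc g (gen s) = g s"
  unfolding lext_def gen_def by (simp add: module.scale_one)

lemma gen_expand: "p = (\<Sum>s\<in>Poly_Mapping.keys p. fsc (Poly_Mapping.lookup p s) (gen s))"
proof (rule poly_mapping_eqI)
  fix k
  show "Poly_Mapping.lookup p k = Poly_Mapping.lookup (\<Sum>s\<in>Poly_Mapping.keys p. fsc (Poly_Mapping.lookup p s) (gen s)) k"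
    by (simp add: lookup_sum lookup_fsc lookup_gen in_keys_iff if_distrib[of "\<lambda>z. _ * z"] sum.delta sum.delta' cong: if_cong)
qed

lemma fext_hom: "module_hom fsc fsc (fext f)"
  unfolding fext_lext by (rule lext_hom[OF module_fsc])

lemma fext_gen[simp]: "fext f (gen s) = f s"
  unfolding fext_lext by (rule lext_gen[OF module_fsc])

lemma fext_add[simp]: "fext f (p + q) = fext f p + fext f q"
  using module_hom.add[OF fext_hom] .

lemma fext_diff[simp]: "fext f (p - q) = fext f p - fext f q"
  using module_hom.diff[OF fext_hom] .

lemma hom_span:
  assumes "module_hom fsc fsc D" "\<And>s. D (gen s) \<in> module.span fsc R"
  shows "D t \<in> module.span fsc R"
proof -
  interpret h: module_hom fsc fsc D by fact
  have "D t = (\<Sum>s\<in>Poly_Mapping.keys t. fsc (Poly_Mapping.lookup t s) (D (gen s)))"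
    by (subst gen_expand) (simp add: h.sum h.scale)
  also have "\<dots> \<in> module.span fsc R"
    by (intro h.m2.span_sum h.m2.span_scale assms(2))
  finally show ?thesis .
qed

lemma hom_kernel_span:
  assumes "module_hom fsc sc F" "\<And>r. r \<in> R \<Longrightarrow> F r = 0" "p \<in> module.span fsc R"
  shows "F p = 0"
proof -
  interpret h: module_hom fsc sc F by fact
  have "module.span fsc R \<subseteq> {x. F x = 0}"
    by (rule h.m1.span_minimal) (use assms(2) h.subspace_kernel in auto)
  thus ?thesis using assms(3) by auto
qed


lemma rel1: "gen (a + a', b, c) - gen (a, b, c) - gen (a', b, c) \<in> tensor3_rels sa sb sc"
  unfolding tensor3_rels_def by (intro UnI1) blast
lemma rel2: "gen (a, b + b', c) - gen (a, b, c) - gen (a, b', c) \<in> tensor3_rels sa sb sc"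
  unfolding tensor3_rels_def by (rule UnI1, rule UnI1, rule UnI1, rule UnI1, rule UnI2) blast

theorem lemma1p2p1:
  fixes sg :: "complex \<Rightarrow> 'g \<Rightarrow> 'g::ab_group_add"
    and sv :: "complex \<Rightarrow> 'v \<Rightarrow> 'v::ab_group_add"
    and br :: "'g \<Rightarrow> 'g \<Rightarrow> 'g"
    and A :: "'g \<Rightarrow> 'v \<Rightarrow> 'v"
  assumes "vector_space sg" and "vector_space sv"
    and "\<And>x. Vector_Spaces.linear sg sg (br x)"
    and "\<And>y. Vector_Spaces.linear sg sg (\<lambda>x. br x y)"
    and "\<And>x. br x x = 0"
    and "\<And>x y z. br x (br y z) + br y (br z x) + br z (br x y) = 0"
    and "\<And>x. Vector_Spaces.linear sv sv (A x)"
    and "\<And>v. Vector_Spaces.linear sg sv (\<lambda>x. A x v)"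
  shows "(\<forall>lam t. tensor3_eq sv (tsc sg) (tsc sg)
            (fext (tens_left (RVmap A lam)) (fext (tens_right (RVmap A lam)) (fext (tens_left (Rmap br lam)) t)))
            (fext (tens_right (Rmap br lam)) (fext (tens_left (RVmap A lam)) (fext (tens_right (RVmap A lam)) t))))
         \<longleftrightarrow> (\<forall>x y v. A (br x y) v = A x (A y v) - A y (A x v))"
proof -
  have A0: "A 0 v = 0" for v
    using module_hom.zero[OF module_hom_linearI[OF assms(8)]] by simp
  have Ax0: "A x 0 = 0" for x
    using module_hom.zero[OF module_hom_linearI[OF assms(7)]] by simp
  have br0: "br 0 y = 0" for y
    using module_hom.zero[OF module_hom_linearI[OF assms(4)]] by simp
  have br0': "br x 0 = 0" for x
    using module_hom.zero[OF module_hom_linearI[OF assms(3)]] by simp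
  interpret V: vector_space sv by fact
  interpret F: module "fsc :: complex \<Rightarrow> ('v \<times> ('g \<times> complex) \<times> ('g \<times> complex)) fv \<Rightarrow> _"
    by (rule module_fsc)
  define R where "R = tensor3_rels sv (tsc sg) (tsc sg)"
  define S where "S = F.span R"
  define L where "L lam t = fext (tens_left (RVmap A lam)) (fext (tens_right (RVmap A lam)) (fext (tens_left (Rmap br lam)) t))" for lam t
  define Q where "Q lam t = fext (tens_right (Rmap br lam)) (fext (tens_left (RVmap A lam)) (fext (tens_right (RVmap A lam)) t))" for lam t
  have genD: "L lam (gen ((x,al),(y,be),v)) - Q lam (gen ((x,al),(y,be),v)) =
     (gen (A y (A x v), (0,lam), (0,lam)) + gen (A (br x y) v, (0,lam), (0,lam)) - gen (A x (A y v), (0,lam), (0,lam)))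
     + gen (0, (br x y, 0), (0,lam)) + gen (0, (0,lam), (0,lam))
     - gen (A x v, (0,0), (0,lam)) - gen (A y v, (0,0), (0,lam)) - gen (A x (A y v), (0,0), (0,lam))"
    for lam x al y be v
    unfolding L_def Q_def
    by (simp add: tens_left_def tens_right_def Rmap_def RVmap_def A0 Ax0 br0 br0' algebra_simps)
  have Rsub: "R \<subseteq> S" unfolding S_def by (rule F.span_superset)
  have Z1: "gen (0, p, q) \<in> S" for p q
  proof -
    have "gen (0+0, p, q) - gen (0, p, q) - gen (0, p, q) \<in> R"
      unfolding R_def by (rule rel1)
    then have "- gen (0, p, q) \<in> S" using Rsub by auto
    then show ?thesis using F.span_neg unfolding S_def by fastforce
  qed
  have Z2: "gen (w, (0,0), q) \<in> S" for w q
  proof -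
    have "gen (w, (0,0)+(0,0), q) - gen (w, (0,0), q) - gen (w, (0,0), q) \<in> R"
      unfolding R_def by (rule rel2)
    then have "- gen (w, (0,0), q) \<in> S" using Rsub by auto
    then show ?thesis using F.span_neg unfolding S_def by fastforce
  qed
  have Lin: "gen (u, p, q) + gen (w - u, p, q) - gen (w, p, q) \<in> S" for u w p q
  proof -
    have "gen (u + (w - u), p, q) - gen (u, p, q) - gen (w - u, p, q) \<in> R"
      unfolding R_def by (rule rel1)
    then have "- (gen (u, p, q) + gen (w - u, p, q) - gen (w, p, q)) \<in> S" using Rsub
      by (auto simp: algebra_simps)
    then show ?thesis using F.span_neg unfolding S_def by fastforce
  qed
  have homD: "module_hom fsc fsc (\<lambda>t. L lam t - Q lam t)" for lam
    unfolding L_def Q_def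
    by (simp add: module_hom_iff module_fsc module_hom.scale[OF fext_hom] F.scale_right_diff_distrib)
  show ?thesis
  proof
    assume H: "\<forall>lam t. tensor3_eq sv (tsc sg) (tsc sg)
            (fext (tens_left (RVmap A lam)) (fext (tens_right (RVmap A lam)) (fext (tens_left (Rmap br lam)) t)))
            (fext (tens_right (Rmap br lam)) (fext (tens_left (RVmap A lam)) (fext (tens_right (RVmap A lam)) t)))"
    show "\<forall>x y v. A (br x y) v = A x (A y v) - A y (A x v)"
    proof (intro allI)
      fix x y v
      define g where "g s = (case s of (w, p, q) \<Rightarrow> sv (snd p * snd q) w)" for s :: "'v \<times> ('g \<times> complex) \<times> ('g \<times> complex)"
      have msv: "module sv" using assms(2) by (simp add: module_iff_vector_space)
      have hP: "module_hom fsc sv (lext sv g)" by (rule lext_hom[OF msv])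
      interpret P: module_hom fsc sv "lext sv g" by (rule hP)
      have Pg: "lext sv g (gen s) = g s" for s by (rule lext_gen[OF msv])
      have PR: "lext sv g r = 0" if "r \<in> R" for r
        using that unfolding R_def tensor3_rels_def
        by (elim UnE CollectE exE conjE)
           (simp_all add: P.add P.diff P.scale Pg g_def tsc_def V.scale_right_distrib
              V.scale_left_distrib distrib_left distrib_right mult.assoc)
      have "L 1 (gen ((x,0),(y,0),v)) - Q 1 (gen ((x,0),(y,0),v)) \<in> S"
        using H unfolding tensor3_eq_def S_def R_def L_def Q_def by blast
      then have "lext sv g (L 1 (gen ((x,0),(y,0),v)) - Q 1 (gen ((x,0),(y,0),v))) = 0"
        using hom_kernel_span[OF hP PR] unfolding S_def by blast
      then show "A (br x y) v = A x (A y v) - A y (A x v)"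
        unfolding genD by (simp add: P.add P.diff Pg g_def algebra_simps)
    qed
  next
    assume act: "\<forall>x y v. A (br x y) v = A x (A y v) - A y (A x v)"
    show "\<forall>lam t. tensor3_eq sv (tsc sg) (tsc sg)
            (fext (tens_left (RVmap A lam)) (fext (tens_right (RVmap A lam)) (fext (tens_left (Rmap br lam)) t)))
            (fext (tens_right (Rmap br lam)) (fext (tens_left (RVmap A lam)) (fext (tens_right (RVmap A lam)) t)))"
    proof (intro allI)
      fix lam t
      have "L lam t - Q lam t \<in> S"
        unfolding S_def
      proof (rule hom_span[OF homD])
        fix s :: "('g \<times> complex) \<times> ('g \<times> complex) \<times> 'v"
        obtain x al y be v where s: "s = ((x,al),(y,be),v)" by (metis prod.exhaust)
        have spd: "a \<in> S \<Longrightarrow> b \<in> S \<Longrightarrow> a - b \<in> S" for a b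
          unfolding S_def by (rule F.span_diff)
        have spa: "a \<in> S \<Longrightarrow> b \<in> S \<Longrightarrow> a + b \<in> S" for a b
          unfolding S_def by (rule F.span_add)
        have main: "gen (A y (A x v), (0, lam), (0, lam)) + gen (A (br x y) v, (0, lam), (0, lam))
           - gen (A x (A y v), (0, lam), (0, lam)) \<in> S"
          using Lin[where u="A y (A x v)" and w="A x (A y v)"] act by simp
        have "L lam (gen s) - Q lam (gen s) \<in> S"
          unfolding s genD
          by (rule spd[OF spd[OF spd[OF spa[OF spa[OF main Z1] Z1] Z2] Z2] Z2])
        then show "L lam (gen s) - Q lam (gen s) \<in> F.span R" unfolding S_def .
      qed
      then show "tensor3_eq sv (tsc sg) (tsc sg)
            (fext (tens_left (RVmap A lam)) (fext (tens_right (RVmap A lam)) (fext (tens_left (Rmap br lam)) t)))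
            (fext (tens_right (Rmap br lam)) (fext (tens_left (RVmap A lam)) (fext (tens_right (RVmap A lam)) t)))"
        unfolding tensor3_eq_def S_def R_def L_def Q_def .
    qed
  qed
qed

end
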